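(* Let $p>1$ be an integer and let $u^{(p)}$ be the fixed point of the substitution $\varphi_p(L)=L^pS$, $\varphi_p(S)=M$, $\varphi_p(M)=L^{p-1}S$. If $Sz'S$ is a factor of $u^{(p)}$ with $|z'|_S=0$, then $z'=L^p$, or $z'=ML^p$, or $z'=ML^{p-1}$.
   Context: $u^{(p)}=\lim_{n\to\infty}\varphi_p^n(L)$. A factor is a finite contiguous subword; $|w|_a$ is the number of occurrences of the letter $a$ in $w$; $L^k$ denotes $k$ concatenated copies of $L$. *)

theory Defs
  imports Main
begin

datatype letter = L | S | M

fun phi :: "nat \<Rightarrow> letter \<Rightarrow> letter list" where
  "phi p L = replicate p L @ [S]"
| "phi p S = [M]"
| "phi p M = replicate (p - 1) L @ [S]"

definition phi_word :: "nat \<Rightarrow> letter list \<Rightarrow> letter list" where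
  "phi_word p w = concat (map (phi p) w)"

text \<open>The fixed point u^(p) = lim phi_p^n(L), as an infinite word nat => letter.
  Since phi_p(L) begins with L, each phi_p^n(L) is a prefix of phi_p^(n+1)(L), and
  (for p > 1) phi_p^(i+1)(L) has length > i, so its i-th letter is the i-th letter
  of the limit.\<close>
definition u :: "nat \<Rightarrow> nat \<Rightarrow> letter" where
  "u p i = ((phi_word p ^^ Suc i) [L]) ! i"

definition factor :: "letter list \<Rightarrow> (nat \<Rightarrow> letter) \<Rightarrow> bool" where
  "factor w x \<longleftrightarrow> (\<exists>i. w = map x [i..<i + length w])"

end

theory Submission
  imports Defs
begin

definition R :: "letter \<Rightarrow> letter \<Rightarrow> bool" where
  "R a b \<longleftrightarrow> (a = S \<longrightarrow> b \<noteq> S) \<and> (a \<noteq> S \<longrightarrow> b \<noteq> M)"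

lemma pw_Nil[simp]: "phi_word p [] = []" by (simp add: phi_word_def)
lemma pw_Cons[simp]: "phi_word p (c # w) = phi p c @ phi_word p w" by (simp add: phi_word_def)
lemma pw_app[simp]: "phi_word p (xs @ ys) = phi_word p xs @ phi_word p ys" by (simp add: phi_word_def)

lemma succ_rep: "successively R (replicate n L @ [S])"
proof (induction n)
  case 0 then show ?case by simp
next
  case (Suc n) then show ?case by (cases n) (auto simp: R_def)
qed

lemma succ_phi1: "successively R (phi p c)"
  by (cases c) (auto simp: succ_rep)

lemma phi_ne[simp]: "phi p c \<noteq> []" by (cases c) auto

lemma last_phi: "last (phi p c) = (if c = S then M else S)" by (cases c) auto

lemma hd_phi: "p > 1 \<Longrightarrow> hd (phi p c) = (if c = S then M else L)"
  by (cases c; cases p) auto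

lemma succ_phi: "p > 1 \<Longrightarrow> successively R w \<Longrightarrow> successively R (phi_word p w)"
proof (induction w)
  case Nil then show ?case by simp
next
  case (Cons c w')
  show ?case
  proof (cases w')
    case Nil then show ?thesis by (simp add: succ_phi1)
  next
    case (Cons d w'')
    have Rcd: "R c d" and sw: "successively R w'" using Cons.prems Cons by auto
    have IH: "successively R (phi_word p w')" using Cons.IH Cons.prems sw by blast
    have "R (last (phi p c)) (hd (phi_word p w'))"
      using Rcd Cons.prems(1) by (auto simp: Cons last_phi hd_phi R_def)
    then show ?thesis using IH succ_phi1[of p c]
      by (simp add: successively_append_iff Cons)
  qed
qed

lemma eqS: "S \<notin> set z \<Longrightarrow> S \<notin> set r \<Longrightarrow> z @ S # b = r @ S # b' \<Longrightarrow> z = r \<and> b = b'"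
proof (induction z arbitrary: r)
  case Nil then show ?case by (cases r) auto
next
  case (Cons x z) then show ?case by (cases r) auto
qed

definition good :: "nat \<Rightarrow> letter list \<Rightarrow> bool" where
  "good p z \<longleftrightarrow> z = replicate p L \<or> z = [M] @ replicate p L \<or> z = [M] @ replicate (p - 1) L"

lemma phi_nonS: "c \<noteq> S \<Longrightarrow> \<exists>r. phi p c = r @ [S] \<and> S \<notin> set r"
  by (cases c) auto

lemma key:
  assumes "p > 1"
  shows "successively R w \<Longrightarrow> phi_word p w = a @ S # z @ S # b \<Longrightarrow> S \<notin> set z \<Longrightarrow> good p z"
proof (induction w arbitrary: a)
  case Nil then show ?case by simp
next
  case (Cons c w')
  have sw: "successively R w'" using Cons.prems(1) by (cases w') auto
  from Cons.prems(2) have eq: "phi p c @ phi_word p w' = a @ (S # z @ S # b)" by simp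
  from eq[unfolded append_eq_append_conv2] obtain us where
    h: "(phi p c = a @ us \<and> us @ phi_word p w' = S # z @ S # b) \<or>
        (phi p c @ us = a \<and> phi_word p w' = us @ S # z @ S # b)" by blast
  then show ?case
  proof
    assume h2: "phi p c @ us = a \<and> phi_word p w' = us @ S # z @ S # b"
    then show ?thesis using Cons.IH sw Cons.prems(3) by blast
  next
    assume h1: "phi p c = a @ us \<and> us @ phi_word p w' = S # z @ S # b"
    show ?thesis
    proof (cases us)
      case Nil
      then show ?thesis using h1 Cons.IH[of "[]"] sw Cons.prems(3) by simp
    next
      case (Cons v us')
      with h1 have v: "v = S" and pw': "us' @ phi_word p w' = z @ S # b"
        and pc: "phi p c = a @ S # us'" by auto
      have cS: "c \<noteq> S" using pc by (cases a) auto
      then obtain r where r: "phi p c = r @ [S]" "S \<notin> set r" using phi_nonS by blast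
      have "count_list (phi p c) S = 1" using r by (simp add: count_notin)
      then have "count_list a S = 0" "count_list us' S = 0" using pc by auto
      then have "S \<notin> set a" by (simp add: count_list_0_iff)
      then have "us' = []" using eqS[of a r us' "[]"] r pc by auto
      then have zb: "phi_word p w' = z @ S # b" using pw' by simp
      show ?thesis
      proof (cases w')
        case Nil then show ?thesis using zb by simp
      next
        case (Cons d w'')
        have Rcd: "R c d" using Cons.prems(1) \<open>w' = d # w''\<close> by simp
        then have dM: "d \<noteq> M" using cS by (simp add: R_def)
        show ?thesis
        proof (cases d)
          case L
          then have "z @ S # b = replicate p L @ S # phi_word p w''" using zb \<open>w' = d # w''\<close> by simp
          then show ?thesis using eqS[of z "replicate p L"] Cons.prems(3) by (auto simp: good_def)
        next
          case M then show ?thesis using dM by simp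
        next
          case S
          then have z1: "z @ S # b = M # phi_word p w''" using zb \<open>w' = d # w''\<close> by simp
          then obtain z'' where z'': "z = M # z''" by (cases z) auto
          with z1 have z2: "z'' @ S # b = phi_word p w''" by simp
          show ?thesis
          proof (cases w'')
            case Nil then show ?thesis using z2 by simp
          next
            case (Cons e w3)
            have "R d e" using Cons.prems(1) \<open>w' = d # w''\<close> \<open>w'' = e # w3\<close> by simp
            then have eS: "e \<noteq> S" using S by (simp add: R_def)
            have sz: "S \<notin> set z''" using Cons.prems(3) z'' by simp
            show ?thesis
            proof (cases e)
              case L
              then have "z'' @ S # b = replicate p L @ S # phi_word p w3" using z2 \<open>w'' = e # w3\<close> by simp
              then show ?thesis using eqS[of z'' "replicate p L"] sz z'' by (auto simp: good_def)
            next
              case M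
              then have "z'' @ S # b = replicate (p-1) L @ S # phi_word p w3" using z2 \<open>w'' = e # w3\<close> by simp
              then show ?thesis using eqS[of z'' "replicate (p-1) L"] sz z'' by (auto simp: good_def)
            next
              case S then show ?thesis using eS by simp
            qed
          qed
        qed
      qed
    qed
  qed
qed

abbreviation W :: "nat \<Rightarrow> nat \<Rightarrow> letter list" where
  "W p n \<equiv> (phi_word p ^^ n) [L]"

lemma succW: "p > 1 \<Longrightarrow> successively R (W p n)"
  by (induction n) (auto simp: succ_phi)

lemma hdW: "p > 0 \<Longrightarrow> \<exists>r. W p n = L # r"
proof (induction n)
  case 0 then show ?case by simp
next
  case (Suc n)
  then obtain r where "W p n = L # r" by blast
  then show ?case using Suc.prems by (cases p) auto
qed

lemma len_phi: "p > 1 \<Longrightarrow> length (phi_word p w) \<ge> length w \<and> (L \<in> set w \<longrightarrow> length (phi_word p w) > length w)"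
proof (induction w)
  case Nil then show ?case by simp
next
  case (Cons c w) then show ?case by (cases c) auto
qed

lemma lenW: "p > 1 \<Longrightarrow> length (W p n) \<ge> Suc n"
proof (induction n)
  case 0 then show ?case by simp
next
  case (Suc n)
  obtain r where "W p n = L # r" using hdW Suc.prems by fastforce
  then have "length (phi_word p (W p n)) > length (W p n)" using len_phi[OF Suc.prems, of "W p n"] by simp
  then show ?case using Suc by simp
qed

lemma prefW: "p > 0 \<Longrightarrow> \<exists>r. W p (Suc n) = W p n @ r"
proof (induction n)
  case 0 then show ?case by (cases p) auto
next
  case (Suc n)
  then obtain r where "W p (Suc n) = W p n @ r" by blast
  then have "W p (Suc (Suc n)) = W p (Suc n) @ phi_word p r" by simp
  then show ?case by blast
qed

lemma prefW_le: assumes "p > 0" "m \<le> N" shows "\<exists>r. W p N = W p m @ r"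
  using assms(2)
proof (induction N rule: dec_induct)
  case base then show ?case by simp
next
  case (step n)
  then obtain r where "W p n = W p m @ r" by blast
  moreover obtain r' where "W p (Suc n) = W p n @ r'" using prefW assms(1) by blast
  ultimately show ?case by auto
qed

lemma nthW: "p > 1 \<Longrightarrow> Suc k \<le> N \<Longrightarrow> u p k = W p N ! k"
proof -
  assume p: "p > 1" and k: "Suc k \<le> N"
  obtain r where r: "W p N = W p (Suc k) @ r" using prefW_le[of p "Suc k" N] p k by auto
  have "length (W p (Suc k)) > k" using lenW[OF p, of "Suc k"] by simp
  then show ?thesis by (simp add: u_def r nth_append)
qed

theorem mainTheorem4:
  fixes p :: nat and z' :: "letter list"
  assumes "p > 1"
    and "factor ([S] @ z' @ [S]) (u p)"
    and "count_list z' S = 0"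
  shows "z' = replicate p L \<or> z' = [M] @ replicate p L \<or> z' = [M] @ replicate (p - 1) L"
proof -
  define len where "len = length ([S] @ z' @ [S])"
  obtain i where fi: "[S] @ z' @ [S] = map (u p) [i..<i + len]"
    using assms(2) unfolding factor_def len_def by blast
  define N where "N = i + len"
  define X where "X = W p N"
  have lX: "length X \<ge> Suc N" using lenW[OF assms(1)] X_def by simp
  have mt: "map (u p) [i..<i + len] = take len (drop i X)"
  proof (rule nth_equalityI)
    show "length (map (u p) [i..<i + len]) = length (take len (drop i X))"
      using lX N_def by simp
  next
    fix k assume "k < length (map (u p) [i..<i + len])"
    then have k: "k < len" by simp
    then have "map (u p) [i..<i + len] ! k = u p (i + k)" by simp
    also have "\<dots> = X ! (i + k)" using nthW[OF assms(1), of "i+k" N] k N_def X_def by simp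
    also have "\<dots> = take len (drop i X) ! k" using k lX N_def by simp
    finally show "map (u p) [i..<i + len] ! k = take len (drop i X) ! k" .
  qed
  have e1: "X = take i X @ take len (drop i X) @ drop len (drop i X)"
    by (simp only: append_take_drop_id)
  have e2: "drop len (drop i X) = drop (i + len) X" by (simp add: add.commute)
  have e: "X = take i X @ take len (drop i X) @ drop (i + len) X" using e1 unfolding e2 .
  have T: "take len (drop i X) = S # z' @ [S]" using fi mt by simp
  have A: "X = take i X @ (S # z' @ S # drop (i + len) X)"
    using e unfolding T by (simp only: append.assoc append_Cons append_Nil)
  have B: "X = phi_word p (W p (N - 1))"
    using X_def N_def len_def by (cases N) auto
  have "phi_word p (W p (N - 1)) = take i X @ S # z' @ S # drop (i + len) X" using A B by metis
  moreover have "S \<notin> set z'" using assms(3) by (simp add: count_list_0_iff)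
  ultimately have "good p z'" using key[OF assms(1) succW[OF assms(1)]] by blast
  then show ?thesis by (simp add: good_def)
qed

end
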